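(* Let $\theta,w\in\mathbb{R}^p$ and $\eta=\theta+w$, and for $c\in\mathbb{R}$ let $\eta(c)=\bar\eta+c(\eta-\bar\eta)$. Assume $\mathrm{var}(\eta)>0$, $\bar\theta\neq0$ and $\bar\eta\neq0$. Then the minimizer over $c\in\mathbb{R}$ of $\mathrm{MSE}(\eta(c),\theta)$ is $$c^{\mathrm{MSE}}=\frac{\mathrm{cov}(\theta,\eta)}{\mathrm{var}(\eta)},$$ and the minimizer over $c\in\mathbb{R}$ of $\mathrm{SPH}(\eta(c),\theta)$ is $$c^{\mathrm{SPH}}=\frac{\bar\eta}{\bar\theta}\,c^{\mathrm{MSE}}.$$
   Context: For $u,v\in\mathbb{R}^p$: $\bar u=\frac1p\sum_i u_i$, $\mathrm{var}(u)=\frac1p\sum_i(u_i-\bar u)^2$, $\mathrm{cov}(u,v)=\frac1p\sum_i(u_i-\bar u)(v_i-\bar v)$; for $x\in\mathbb{R}$, $u-x$ and $x+u$ are componentwise. $\mathrm{MSE}(u,\theta)=\langle u-\theta,u-\theta\rangle/p$, and for nonzero $u,\theta$, $\mathrm{SPH}(u,\theta)=1-\left(\frac{\langle u,\theta\rangle}{|u||\theta|}\right)^2$. *)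

theory Defs
  imports "HOL-Analysis.Analysis"
begin

definition vmean :: "real^'n \<Rightarrow> real" where
  "vmean u = (\<Sum>i\<in>UNIV. u $ i) / real CARD('n)"

definition vvar :: "real^'n \<Rightarrow> real" where
  "vvar u = (\<Sum>i\<in>UNIV. (u $ i - vmean u)\<^sup>2) / real CARD('n)"

definition vcov :: "real^'n \<Rightarrow> real^'n \<Rightarrow> real" where
  "vcov u v = (\<Sum>i\<in>UNIV. (u $ i - vmean u) * (v $ i - vmean v)) / real CARD('n)"

definition MSE :: "real^'n \<Rightarrow> real^'n \<Rightarrow> real" where
  "MSE u \<theta> = inner (u - \<theta>) (u - \<theta>) / real CARD('n)"

definition SPH :: "real^'n \<Rightarrow> real^'n \<Rightarrow> real" where
  "SPH u \<theta> = 1 - (inner u \<theta> / (norm u * norm \<theta>))\<^sup>2"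

definition shrink :: "real^'n \<Rightarrow> real \<Rightarrow> real^'n" where
  "shrink \<eta> c = (\<chi> i. vmean \<eta> + c * (\<eta> $ i - vmean \<eta>))"

end

theory Submission
  imports Defs
begin

lemma Qbound:
  fixes m t C V c :: real
  assumes V: "V > 0" and m: "m \<noteq> 0" and t: "t \<noteq> 0"
  shows "(m*t + c*C)^2/(m^2 + c^2*V) \<le> (t^2*V + C^2)/V"
    and "(m*t + c*C)^2/(m^2 + c^2*V) \<ge> (t^2*V + C^2)/V \<Longrightarrow> c = m/t*(C/V)"
    and "(m*t + (m/t*(C/V))*C)^2/(m^2 + (m/t*(C/V))^2*V) = (t^2*V + C^2)/V"
proof -
  have den: "m^2 + c^2*V > 0" for c using V m by (simp add: add_pos_nonneg)
  have lag: "(m^2+c^2*V)*(t^2*V+C^2) - V*(m*t+c*C)^2 = (m*C - c*V*t)^2" for c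
    by (simp add: power2_eq_square algebra_simps)
  have key: "(m*t + c*C)^2/(m^2 + c^2*V) \<le> (t^2*V + C^2)/V \<longleftrightarrow> V*(m*t+c*C)^2 \<le> (m^2+c^2*V)*(t^2*V+C^2)" for c
    using den[of c] V by (simp add: divide_simps mult.commute)
  show "(m*t + c*C)^2/(m^2 + c^2*V) \<le> (t^2*V + C^2)/V"
    using key lag[of c] by (smt (verit) zero_le_power2)
  show "c = m/t*(C/V)" if h: "(m*t + c*C)^2/(m^2 + c^2*V) \<ge> (t^2*V + C^2)/V"
  proof -
    have "V*(m*t+c*C)^2 \<ge> (m^2+c^2*V)*(t^2*V+C^2)"
      using h den[of c] V by (simp add: divide_simps mult.commute)
    then have "(m*C - c*V*t)^2 \<le> 0" using lag[of c] by linarith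
    then have "m*C = c*V*t" by simp
    then show ?thesis using V t by (simp add: field_simps)
  qed
  show "(m*t + (m/t*(C/V))*C)^2/(m^2 + (m/t*(C/V))^2*V) = (t^2*V + C^2)/V"
  proof -
    let ?c = "m/t*(C/V)"
    have "(m*C - ?c*V*t)^2 = 0" using V t by (simp add: field_simps)
    then have "V*(m*t+?c*C)^2 = (m^2+?c^2*V)*(t^2*V+C^2)" using lag[of ?c] by linarith
    then show ?thesis using den[of ?c] V by (simp add: divide_simps mult.commute)
  qed
qed


lemma sums:
  fixes \<theta> \<eta> :: "real^'n"
  defines "p \<equiv> real CARD('n)"
  shows "inner (shrink \<eta> c) \<theta> = p*(vmean \<eta> * vmean \<theta> + c * vcov \<theta> \<eta>)"
    and "inner (shrink \<eta> c) (shrink \<eta> c) = p*((vmean \<eta>)^2 + c^2 * vvar \<eta>)"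
proof -
  have p: "p > 0" unfolding p_def by simp
  let ?m = "vmean \<eta>" and ?t = "vmean \<theta>"
  have s\<eta>: "(\<Sum>i\<in>UNIV. \<eta>$i) = p*?m" using p unfolding vmean_def p_def by simp
  have s\<theta>: "(\<Sum>i\<in>UNIV. \<theta>$i) = p*?t" using p unfolding vmean_def p_def by simp
  have d0: "(\<Sum>i\<in>UNIV. \<eta>$i - ?m) = 0" using s\<eta> by (simp add: sum_subtractf p_def)
  have sV: "(\<Sum>i\<in>UNIV. (\<eta>$i - ?m)^2) = p * vvar \<eta>" using p unfolding vvar_def p_def by simp
  have sC0: "(\<Sum>i\<in>UNIV. (\<theta>$i - ?t)*(\<eta>$i - ?m)) = p * vcov \<theta> \<eta>" using p unfolding vcov_def p_def by simp
  have "(\<Sum>i\<in>UNIV. (\<theta>$i - ?t)*(\<eta>$i - ?m)) = (\<Sum>i\<in>UNIV. (\<eta>$i - ?m)*\<theta>$i - ?t*(\<eta>$i - ?m))"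
    by (rule sum.cong) (simp_all add: algebra_simps)
  also have "\<dots> = (\<Sum>i\<in>UNIV. (\<eta>$i - ?m)*\<theta>$i) - (\<Sum>i\<in>UNIV. ?t*(\<eta>$i - ?m))"
    by (rule sum_subtractf)
  also have "(\<Sum>i\<in>UNIV. ?t*(\<eta>$i - ?m)) = ?t*(\<Sum>i\<in>UNIV. \<eta>$i - ?m)"
    by (rule sum_distrib_left[symmetric])
  finally have "(\<Sum>i\<in>UNIV. (\<theta>$i - ?t)*(\<eta>$i - ?m)) = (\<Sum>i\<in>UNIV. (\<eta>$i - ?m)*\<theta>$i) - ?t*(\<Sum>i\<in>UNIV. \<eta>$i - ?m)" .
  then have sC: "(\<Sum>i\<in>UNIV. (\<eta>$i - ?m)*\<theta>$i) = p * vcov \<theta> \<eta>" using sC0 d0 by simp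
  have "inner (shrink \<eta> c) \<theta> = (\<Sum>i\<in>UNIV. ?m*\<theta>$i + c*((\<eta>$i - ?m)*\<theta>$i))"
    unfolding shrink_def inner_vec_def by (simp add: algebra_simps)
  also have "\<dots> = ?m*(\<Sum>i\<in>UNIV. \<theta>$i) + c*(\<Sum>i\<in>UNIV. (\<eta>$i - ?m)*\<theta>$i)"
    by (simp add: sum.distrib sum_distrib_left)
  finally show "inner (shrink \<eta> c) \<theta> = p*(vmean \<eta> * vmean \<theta> + c * vcov \<theta> \<eta>)"
    using s\<theta> sC by (simp add: algebra_simps)
  have "inner (shrink \<eta> c) (shrink \<eta> c) = (\<Sum>i\<in>UNIV. ?m^2 + (2*?m*c)*(\<eta>$i - ?m) + c^2*(\<eta>$i - ?m)^2)"
    unfolding shrink_def inner_vec_def by (simp add: power2_eq_square algebra_simps)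
  also have "\<dots> = p*?m^2 + (2*?m*c)*(\<Sum>i\<in>UNIV. \<eta>$i - ?m) + c^2*(\<Sum>i\<in>UNIV. (\<eta>$i - ?m)^2)"
    by (simp add: sum.distrib sum_distrib_left[symmetric] p_def)
  finally show "inner (shrink \<eta> c) (shrink \<eta> c) = p*((vmean \<eta>)^2 + c^2 * vvar \<eta>)"
    using d0 sV by (simp add: algebra_simps)
qed

lemma MSE_form:
  fixes \<theta> \<eta> :: "real^'n"
  shows "MSE (shrink \<eta> c) \<theta> = (vmean \<eta>)^2 + c^2 * vvar \<eta> - 2*(vmean \<eta> * vmean \<theta> + c * vcov \<theta> \<eta>) + inner \<theta> \<theta> / real CARD('n)"
proof -
  have "inner (shrink \<eta> c - \<theta>) (shrink \<eta> c - \<theta>) = inner (shrink \<eta> c) (shrink \<eta> c) - 2 * inner (shrink \<eta> c) \<theta> + inner \<theta> \<theta>"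
    by (simp add: inner_diff_left inner_diff_right inner_commute)
  then show ?thesis unfolding MSE_def using sums(1)[where \<eta>=\<eta> and c=c and \<theta>=\<theta>] sums(2)[where \<eta>=\<eta> and c=c]
    by (simp add: field_simps)
qed

lemma SPH_form:
  fixes \<theta> \<eta> :: "real^'n"
  assumes "vmean \<eta> \<noteq> 0" "vmean \<theta> \<noteq> 0"
  shows "SPH (shrink \<eta> c) \<theta> = 1 - ((vmean \<eta> * vmean \<theta> + c * vcov \<theta> \<eta>)^2 / ((vmean \<eta>)^2 + c^2 * vvar \<eta>)) / (inner \<theta> \<theta> / real CARD('n))"
proof -
  define p where "p = real CARD('n)"
  have p: "p > 0" unfolding p_def by simp
  have "(norm (shrink \<eta> c))^2 = p*((vmean \<eta>)^2 + c^2 * vvar \<eta>)"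
    using sums(2)[of \<eta> c] by (simp add: power2_norm_eq_inner p_def)
  moreover have "(norm \<theta>)^2 = inner \<theta> \<theta>" by (simp add: power2_norm_eq_inner)
  moreover have "inner (shrink \<eta> c) \<theta> = p*(vmean \<eta> * vmean \<theta> + c * vcov \<theta> \<eta>)"
    using sums(1)[where \<eta>=\<eta> and c=c and \<theta>=\<theta>] by (simp add: p_def)
  ultimately have "(inner (shrink \<eta> c) \<theta> / (norm (shrink \<eta> c) * norm \<theta>))^2
     = (p*(vmean \<eta> * vmean \<theta> + c * vcov \<theta> \<eta>))^2 / (p*((vmean \<eta>)^2 + c^2 * vvar \<eta>) * inner \<theta> \<theta>)"
    by (simp add: power_divide power_mult_distrib)
  also have "\<dots> = ((vmean \<eta> * vmean \<theta> + c * vcov \<theta> \<eta>)^2 / ((vmean \<eta>)^2 + c^2 * vvar \<eta>)) / (inner \<theta> \<theta> / p)"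
    using p by (simp add: power2_eq_square)
  finally show ?thesis unfolding SPH_def p_def by simp
qed

theorem lemma1:
  fixes \<theta> w :: "real^'n"
  defines "\<eta> \<equiv> \<theta> + w"
  assumes "vvar \<eta> > 0" and "vmean \<theta> \<noteq> 0" and "vmean \<eta> \<noteq> 0"
  shows "(\<forall>c. MSE (shrink \<eta> (vcov \<theta> \<eta> / vvar \<eta>)) \<theta> \<le> MSE (shrink \<eta> c) \<theta>)
       \<and> (\<forall>c. (\<forall>c'. MSE (shrink \<eta> c) \<theta> \<le> MSE (shrink \<eta> c') \<theta>) \<longrightarrow> c = vcov \<theta> \<eta> / vvar \<eta>)
       \<and> (\<forall>c. SPH (shrink \<eta> (vmean \<eta> / vmean \<theta> * (vcov \<theta> \<eta> / vvar \<eta>))) \<theta> \<le> SPH (shrink \<eta> c) \<theta>)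
       \<and> (\<forall>c. (\<forall>c'. SPH (shrink \<eta> c) \<theta> \<le> SPH (shrink \<eta> c') \<theta>)
              \<longrightarrow> c = vmean \<eta> / vmean \<theta> * (vcov \<theta> \<eta> / vvar \<eta>))"
proof -
  define m where "m = vmean \<eta>"
  define t where "t = vmean \<theta>"
  define V where "V = vvar \<eta>"
  define C where "C = vcov \<theta> \<eta>"
  define T where "T = inner \<theta> \<theta> / real CARD('n)"
  have V: "V > 0" and m: "m \<noteq> 0" and t: "t \<noteq> 0" using assms by (auto simp: V_def m_def t_def)
  have "\<theta> \<noteq> 0" using t unfolding t_def vmean_def by auto
  then have T: "T > 0" unfolding T_def by simp
  have M: "MSE (shrink \<eta> c) \<theta> = m^2 + c^2*V - 2*(m*t + c*C) + T" for c
    using MSE_form[of \<eta> c \<theta>] by (simp add: m_def t_def V_def C_def T_def)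
  have S: "SPH (shrink \<eta> c) \<theta> = 1 - ((m*t + c*C)^2/(m^2 + c^2*V)) / T" for c
    using SPH_form[of \<eta> \<theta> c] assms by (simp add: m_def t_def V_def C_def T_def)
  have Mid: "c^2*V - 2*c*C = V*(c - C/V)^2 - C^2/V" for c
    using V by (simp add: power2_eq_square field_simps)
  have P1: "\<forall>c. MSE (shrink \<eta> (C/V)) \<theta> \<le> MSE (shrink \<eta> c) \<theta>"
  proof
    fix c
    have "MSE (shrink \<eta> c) \<theta> - MSE (shrink \<eta> (C/V)) \<theta> = V*(c - C/V)^2"
      unfolding M using V by (simp add: power2_eq_square field_simps)
    moreover have "V*(c - C/V)^2 \<ge> 0" using V by simp
    ultimately show "MSE (shrink \<eta> (C/V)) \<theta> \<le> MSE (shrink \<eta> c) \<theta>" by linarith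
  qed
  have P2: "\<forall>c. (\<forall>c'. MSE (shrink \<eta> c) \<theta> \<le> MSE (shrink \<eta> c') \<theta>) \<longrightarrow> c = C/V"
  proof (intro allI impI)
    fix c assume "\<forall>c'. MSE (shrink \<eta> c) \<theta> \<le> MSE (shrink \<eta> c') \<theta>"
    then have "MSE (shrink \<eta> c) \<theta> \<le> MSE (shrink \<eta> (C/V)) \<theta>" by blast
    moreover have "MSE (shrink \<eta> c) \<theta> - MSE (shrink \<eta> (C/V)) \<theta> = V*(c - C/V)^2"
      unfolding M using V by (simp add: power2_eq_square field_simps)
    ultimately have "V*(c - C/V)^2 \<le> 0" by linarith
    then have "(c - C/V)^2 \<le> 0" using V by (simp add: mult_le_0_iff)
    then show "c = C/V" by simp
  qed
  have P3: "\<forall>c. SPH (shrink \<eta> (m/t*(C/V))) \<theta> \<le> SPH (shrink \<eta> c) \<theta>"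
  proof
    fix c
    have "(m*t + c*C)^2/(m^2 + c^2*V) \<le> (m*t + (m/t*(C/V))*C)^2/(m^2 + (m/t*(C/V))^2*V)"
      using Qbound(1)[OF V m t, of c C] Qbound(3)[OF V m t, of C] by simp
    then have "(m*t + c*C)^2/(m^2 + c^2*V) / T \<le> (m*t + (m/t*(C/V))*C)^2/(m^2 + (m/t*(C/V))^2*V) / T"
      using T by (intro divide_right_mono) auto
    then show "SPH (shrink \<eta> (m/t*(C/V))) \<theta> \<le> SPH (shrink \<eta> c) \<theta>"
      by (simp only: S)
  qed
  have P4: "\<forall>c. (\<forall>c'. SPH (shrink \<eta> c) \<theta> \<le> SPH (shrink \<eta> c') \<theta>) \<longrightarrow> c = m/t*(C/V)"
  proof (intro allI impI)
    fix c assume "\<forall>c'. SPH (shrink \<eta> c) \<theta> \<le> SPH (shrink \<eta> c') \<theta>"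
    then have "SPH (shrink \<eta> c) \<theta> \<le> SPH (shrink \<eta> (m/t*(C/V))) \<theta>" by blast
    then have "(m*t + (m/t*(C/V))*C)^2/(m^2 + (m/t*(C/V))^2*V) / T \<le> (m*t + c*C)^2/(m^2 + c^2*V) / T"
      by (simp only: S)
    then have "(m*t + (m/t*(C/V))*C)^2/(m^2 + (m/t*(C/V))^2*V) / T * T \<le> (m*t + c*C)^2/(m^2 + c^2*V) / T * T"
      using T by (intro mult_right_mono) auto
    then have "(m*t + (m/t*(C/V))*C)^2/(m^2 + (m/t*(C/V))^2*V) \<le> (m*t + c*C)^2/(m^2 + c^2*V)"
      using T by simp
    then have "(t^2*V + C^2)/V \<le> (m*t + c*C)^2/(m^2 + c^2*V)"
      using Qbound(3)[OF V m t, of C] by linarith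
    then show "c = m/t*(C/V)"
      by (rule Qbound(2)[OF V m t])
  qed
  show ?thesis using P1 P2 P3 P4 unfolding m_def t_def V_def C_def by blast
qed

end
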